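(* For all real numbers $a,b>0$ and $0\le v\le 1$, $$G_v(a,b)\le \left\{1+\frac{\mu^2}{2}\left(\log a-\log b\right)^2\right\}G_v(a,b)\le A_v(a,b),$$ where $\mu:=\min\{1-v,v\}$.
   Context: For $a,b>0$ and $0\le v\le 1$: $A_v(a,b):=(1-v)a+vb$ is the weighted arithmetic mean and $G_v(a,b):=a^{1-v}b^v$ is the weighted geometric mean. *)

theory Defs
  imports Complex_Main
begin

definition wam :: "real \<Rightarrow> real \<Rightarrow> real \<Rightarrow> real" where
  "wam v a b = (1 - v) * a + v * b"

definition wgm :: "real \<Rightarrow> real \<Rightarrow> real \<Rightarrow> real" where
  "wgm v a b = a powr (1 - v) * b powr v"

end

theory Submission
  imports Defs
begin

lemma amgm_aux:
  fixes v t :: real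
  assumes v0: "0 < v" and vh: "v \<le> 1/2"
  shows "v / (1 - v) \<le> (1 - v) * exp ((1 - v) * t) + v * exp (- v * t)"
proof -
  define c where "c = ln ((1 - v) / v)"
  have c0: "c \<ge> 0" unfolding c_def using v0 vh by (simp add: field_simps)
  have ec: "exp c = (1 - v) / v" unfolding c_def using v0 vh by simp
  have emc: "exp (- c) = v / (1 - v)" using ec by (simp add: exp_minus)
  define X where "X = c + (1 - v) * t"
  define Y where "Y = - c - v * t"
  define m where "m = v * X + (1 - v) * Y"
  have m: "m = (2 * v - 1) * c" unfolding m_def X_def Y_def by (simp add: algebra_simps)
  have h1: "exp X \<ge> exp m * (1 + (X - m))"
    using exp_ge_add_one_self[of "X - m"] by (simp add: exp_diff field_simps)
  have h2: "exp Y \<ge> exp m * (1 + (Y - m))"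
    using exp_ge_add_one_self[of "Y - m"] by (simp add: exp_diff field_simps)
  have "v * exp X + (1 - v) * exp Y \<ge> v * (exp m * (1 + (X - m))) + (1 - v) * (exp m * (1 + (Y - m)))"
    using h1 h2 v0 vh by (intro add_mono mult_left_mono) auto
  also have "v * (exp m * (1 + (X - m))) + (1 - v) * (exp m * (1 + (Y - m))) = exp m"
    unfolding m_def by (simp add: algebra_simps)
  finally have A: "exp m \<le> v * exp X + (1 - v) * exp Y" .
  have "- c \<le> m" unfolding m using mult_nonneg_nonneg[of "2*v" c] c0 v0 by (simp add: algebra_simps)
  hence "exp (- c) \<le> exp m" by simp
  hence B: "v / (1 - v) \<le> exp m" using emc by simp
  have "v * exp X = (1 - v) * exp ((1 - v) * t)"
    unfolding X_def using ec v0 by (simp add: exp_add)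
  moreover have "(1 - v) * exp Y = v * exp (- v * t)"
  proof -
    have "exp Y = exp (- c) * exp (- v * t)" unfolding Y_def by (simp flip: exp_add)
    thus ?thesis using emc vh by simp
  qed
  ultimately show ?thesis using A B by simp
qed

lemma key:
  fixes v t :: real
  assumes v0: "0 < v" and vh: "v \<le> 1/2"
  shows "1 + v^2 / 2 * t^2 \<le> (1 - v) * exp (- v * t) + v * exp ((1 - v) * t)"
proof -
  define g where "g = (\<lambda>t. (1 - v) * exp (- v * t) + v * exp ((1 - v) * t) - 1 - v^2 / 2 * t^2)"
  define g' where "g' = (\<lambda>t. v * (1 - v) * (exp ((1 - v) * t) - exp (- v * t)) - v^2 * t)"
  define g'' where "g'' = (\<lambda>t. v * (1 - v) * ((1 - v) * exp ((1 - v) * t) + v * exp (- v * t)) - v^2)"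
  have dg: "DERIV g x :> g' x" for x
    unfolding g_def g'_def
    by (auto intro!: derivative_eq_intros simp: algebra_simps power2_eq_square)
  have dg': "DERIV g' x :> g'' x" for x
    unfolding g'_def g''_def
    by (auto intro!: derivative_eq_intros simp: algebra_simps power2_eq_square)
  have g''0: "g'' x \<ge> 0" for x
  proof -
    have "v / (1 - v) \<le> (1 - v) * exp ((1 - v) * x) + v * exp (- v * x)"
      by (rule amgm_aux[OF v0 vh])
    hence "v * (1 - v) * (v / (1 - v)) \<le> v * (1 - v) * ((1 - v) * exp ((1 - v) * x) + v * exp (- v * x))"
      using v0 vh by (intro mult_left_mono) auto
    moreover have "v * (1 - v) * (v / (1 - v)) = v^2" using vh by (simp add: power2_eq_square)
    ultimately show ?thesis unfolding g''_def by simp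
  qed
  have g'0: "g' 0 = 0" unfolding g'_def by simp
  have g0: "g 0 = 0" unfolding g_def by simp
  have "g t \<ge> 0"
  proof (cases "t \<ge> 0")
    case True
    have pos: "g' x \<ge> 0" if x0: "0 \<le> x" for x
    proof -
      have "g' 0 \<le> g' x"
      proof (rule DERIV_nonneg_imp_nondecreasing[OF x0])
        fix z :: real show "\<exists>y. DERIV g' z :> y \<and> y \<ge> 0" using dg'[of z] g''0[of z] by blast
      qed
      thus ?thesis using g'0 by simp
    qed
    have "g 0 \<le> g t"
    proof (rule DERIV_nonneg_imp_nondecreasing[OF True])
      fix z :: real assume "0 \<le> z" show "\<exists>y. DERIV g z :> y \<and> y \<ge> 0" using dg[of z] pos[OF \<open>0 \<le> z\<close>] by blast
    qed
    thus ?thesis using g0 by simp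
  next
    case False
    have neg: "g' x \<le> 0" if x0: "x \<le> 0" for x
    proof -
      have "g' x \<le> g' 0"
      proof (rule DERIV_nonneg_imp_nondecreasing[OF x0])
        fix z :: real show "\<exists>y. DERIV g' z :> y \<and> y \<ge> 0" using dg'[of z] g''0[of z] by blast
      qed
      thus ?thesis using g'0 by simp
    qed
    have t0: "t \<le> 0" using False by simp
    have "g 0 \<le> g t"
    proof (rule DERIV_nonpos_imp_nonincreasing[OF t0])
      fix z :: real assume "z \<le> 0" show "\<exists>y. DERIV g z :> y \<and> y \<le> 0" using dg[of z] neg[OF \<open>z \<le> 0\<close>] by blast
    qed
    thus ?thesis using g0 by simp
  qed
  thus ?thesis unfolding g_def by simp
qed

lemma main_half:
  fixes a b v :: real
  assumes "a > 0" and "b > 0" and "0 \<le> v" and "v \<le> 1/2"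
  shows "(1 + v^2 / 2 * (ln a - ln b)^2) * wgm v a b \<le> wam v a b"
proof (cases "v = 0")
  case True
  thus ?thesis using assms by (simp add: wgm_def wam_def)
next
  case False
  hence v0: "v > 0" using assms by simp
  define x where "x = ln a"
  define y where "y = ln b"
  have a: "a = exp x" and b: "b = exp y" using assms unfolding x_def y_def by simp_all
  define G where "G = exp ((1 - v) * x + v * y)"
  have G: "wgm v a b = G" unfolding wgm_def G_def a b powr_def by (simp add: exp_add)
  have Gpos: "G > 0" unfolding G_def by simp
  have "wam v a b = G * ((1 - v) * exp (- v * (y - x)) + v * exp ((1 - v) * (y - x)))"
    unfolding wam_def G_def a b by (simp add: algebra_simps flip: exp_add)
  moreover have "1 + v^2 / 2 * (y - x)^2 \<le> (1 - v) * exp (- v * (y - x)) + v * exp ((1 - v) * (y - x))"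
    by (rule key[OF v0 assms(4)])
  moreover have "(ln a - ln b)^2 = (y - x)^2" unfolding x_def y_def by (simp add: power2_commute)
  ultimately show ?thesis using G Gpos by (simp add: mult.commute)
qed

theorem theorem2p1:
  fixes a b v :: real
  assumes "a > 0" and "b > 0" and "0 \<le> v" and "v \<le> 1"
  shows "wgm v a b \<le> (1 + (min (1 - v) v)^2 / 2 * (ln a - ln b)^2) * wgm v a b
       \<and> (1 + (min (1 - v) v)^2 / 2 * (ln a - ln b)^2) * wgm v a b \<le> wam v a b"
proof
  have "wgm v a b \<ge> 0" unfolding wgm_def by simp
  thus "wgm v a b \<le> (1 + (min (1 - v) v)^2 / 2 * (ln a - ln b)^2) * wgm v a b"
    by (simp add: mult_le_cancel_right1)
next
  show "(1 + (min (1 - v) v)^2 / 2 * (ln a - ln b)^2) * wgm v a b \<le> wam v a b"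
  proof (cases "v \<le> 1/2")
    case True
    hence "min (1 - v) v = v" by simp
    thus ?thesis using main_half[OF assms(1,2,3) True] by simp
  next
    case False
    hence m: "min (1 - v) v = 1 - v" by simp
    have "(1 + (1 - v)^2 / 2 * (ln b - ln a)^2) * wgm (1 - v) b a \<le> wam (1 - v) b a"
      using main_half[OF assms(2,1), of "1 - v"] False assms by simp
    moreover have "wgm (1 - v) b a = wgm v a b" unfolding wgm_def by simp
    moreover have "wam (1 - v) b a = wam v a b" unfolding wam_def by simp
    moreover have "(ln b - ln a)^2 = (ln a - ln b)^2" by (simp add: power2_commute)
    ultimately show ?thesis using m by simp
  qed
qed

end
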